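(* Fix $2\le d\le7$. There exists $c_d$ with $0<c_g<c_d$ such that for all $0\le c<c_d$: both $x\mapsto\mathsf i(c,x)$ and $x\mapsto\mathsf j(c,x)$ have unique fixed points $a_c,b_c$ in $(0,1)$; $|\partial\mathsf i(c,x)/\partial x|<1$ and $|\partial\mathsf j(c,x)/\partial x|<1$ for $x\in[0,1]$; for any $x\in[0,1]$ the iterates of $\mathsf i(c,\cdot)$ from $x$ converge to $a_c$ and the iterates of $\mathsf j(c,\cdot)$ from $x$ converge to $b_c$; and $\mathsf i(c,x)>x$ if and only if $x\in[0,a_c)$, while $\mathsf j(c,x)>x$ if and only if $x\in[0,b_c)$ (for $x\in[0,1]$).
   Context: $f(\alpha,x):=\big(\frac{1+\alpha x}{1+2x}\big)^d$ for $1\le\alpha<2$, $0\le x\le1$. $\mathsf i(c,x):=f(1,f(1+c,x))$ and $\mathsf j(c,x):=f(1+c,f(1,x))$. $g(b,x):=b^d\big(\frac{1+x+x^2}{1+b+bx}\big)^d$, and $c_g$ denotes the unique fixed point in $(0,1)$ of $x\mapsto g(1,x)$. *)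

theory Defs
  imports "HOL-Analysis.Analysis"
begin

definition ff :: "nat \<Rightarrow> real \<Rightarrow> real \<Rightarrow> real" where
  "ff d \<alpha> x = ((1 + \<alpha> * x) / (1 + 2 * x)) ^ d"

definition ii :: "nat \<Rightarrow> real \<Rightarrow> real \<Rightarrow> real" where
  "ii d c x = ff d 1 (ff d (1 + c) x)"

definition jj :: "nat \<Rightarrow> real \<Rightarrow> real \<Rightarrow> real" where
  "jj d c x = ff d (1 + c) (ff d 1 x)"

definition gg :: "nat \<Rightarrow> real \<Rightarrow> real \<Rightarrow> real" where
  "gg d b x = b ^ d * ((1 + x + x ^ 2) / (1 + b + b * x)) ^ d"

definition c_g :: "nat \<Rightarrow> real" where
  "c_g d = (THE x. 0 < x \<and> x < 1 \<and> gg d 1 x = x)"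

end

theory Submission
  imports Defs
begin


lemma contraction_props:
  fixes h h' :: "real \<Rightarrow> real" and L :: real
  assumes der: "\<And>x. 0 \<le> x \<Longrightarrow> x \<le> 1 \<Longrightarrow> (h has_real_derivative h' x) (at x)"
    and bnd: "\<And>x. 0 \<le> x \<Longrightarrow> x \<le> 1 \<Longrightarrow> \<bar>h' x\<bar> \<le> L" and L1: "L < 1"
    and maps: "\<And>x. 0 \<le> x \<Longrightarrow> x \<le> 1 \<Longrightarrow> 0 \<le> h x \<and> h x \<le> 1"
    and h0: "h 0 > 0" and h1: "h 1 < 1"
  shows "(\<exists>!a. 0 < a \<and> a < 1 \<and> h a = a) \<and>
         (\<forall>a. 0 < a \<and> a < 1 \<and> h a = a \<longrightarrow>
            (\<forall>x\<in>{0..1}. (\<lambda>n. (h ^^ n) x) \<longlonglongrightarrow> a) \<and>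
            (\<forall>x\<in>{0..1}. h x > x \<longleftrightarrow> x \<in> {0..<a}))"
proof -
  have lip0: "\<bar>h y - h x\<bar> \<le> L * \<bar>y - x\<bar>" if "0\<le>x" "x<y" "y\<le>1" for x y
  proof -
    have "\<exists>z. x < z \<and> z < y \<and> h y - h x = (y - x) * h' z"
    proof (rule MVT2)
      show "x < y" by fact
      fix t assume "x \<le> t" "t \<le> y"
      then show "(h has_real_derivative h' t) (at t)" using der that by auto
    qed
    then obtain z where z: "x<z" "z<y" "h y - h x = (y-x) * h' z" by blast
    have "\<bar>h y - h x\<bar> = (y-x) * \<bar>h' z\<bar>" using z that by (simp add: abs_mult)
    also have "\<dots> \<le> (y-x)*L" using bnd[of z] z that by (intro mult_left_mono) auto
    finally show ?thesis using that by (simp add: mult.commute)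
  qed
  have lip: "\<bar>h x - h y\<bar> \<le> L * \<bar>x - y\<bar>" if "0\<le>x" "x\<le>1" "0\<le>y" "y\<le>1" for x y
  proof (cases x y rule: linorder_cases)
    case less then show ?thesis using lip0[of x y] that by (simp add: abs_minus_commute)
  next
    case equal then show ?thesis using lip0 that by simp
  next
    case greater then show ?thesis using lip0[of y x] that by simp
  qed
  have L0: "0 \<le> L" using bnd[of 0] by auto
  have conth: "continuous_on {0..1} h"
    by (rule continuous_at_imp_continuous_on) (auto intro!: DERIV_isCont[OF der])
  have cont: "continuous_on {0..1} (\<lambda>x. h x - x)"
    by (intro continuous_on_diff conth continuous_on_id)
  obtain r where r: "r \<in> {0..1}" "h r - r = 0"
    using IVT2'[of "\<lambda>x. h x - x" 1 0 0, OF _ _ _ cont] h0 h1 by auto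
  have r01: "0 < r" "r < 1" using r h0 h1 by (auto simp: less_le)
  have uniq: "a = b" if "0 < a" "a < 1" "h a = a" "0 < b" "b < 1" "h b = b" for a b
  proof -
    have "\<bar>a - b\<bar> \<le> L * \<bar>a - b\<bar>" using lip[of a b] that by simp
    then have "(1 - L) * \<bar>a - b\<bar> \<le> 0" by (simp add: algebra_simps)
    note * = this
    show ?thesis
    proof (rule ccontr)
      assume "a \<noteq> b"
      then have "0 < (1 - L) * \<bar>a - b\<bar>" using L1 by (intro mult_pos_pos) auto
      with * show False by linarith
    qed
  qed
  have ex1: "\<exists>!a. 0 < a \<and> a < 1 \<and> h a = a"
    using r r01 uniq by (intro ex1I[of _ r]) auto
  have rest: "(\<forall>x\<in>{0..1}. (\<lambda>n. (h ^^ n) x) \<longlonglongrightarrow> a) \<and>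
            (\<forall>x\<in>{0..1}. h x > x \<longleftrightarrow> x \<in> {0..<a})"
    if a: "0 < a" "a < 1" "h a = a" for a
  proof (intro conjI ballI)
    fix x :: real assume x: "x \<in> {0..1}"
    have inn: "(h ^^ n) x \<in> {0..1}" for n
      by (induction n) (use x maps in auto)
    have dist: "\<bar>(h ^^ n) x - a\<bar> \<le> L ^ n * \<bar>x - a\<bar>" for n
    proof (induction n)
      case 0 then show ?case by simp
    next
      case (Suc n)
      have "\<bar>(h ^^ Suc n) x - a\<bar> = \<bar>h ((h ^^ n) x) - h a\<bar>" using a by simp
      also have "\<dots> \<le> L * \<bar>(h ^^ n) x - a\<bar>" using lip[of "(h ^^ n) x" a] inn[of n] a by auto
      also have "\<dots> \<le> L * (L ^ n * \<bar>x - a\<bar>)" using Suc L0 by (rule mult_left_mono)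
      finally show ?case by simp
    qed
    have g0: "(\<lambda>n. L ^ n * \<bar>x - a\<bar>) \<longlonglongrightarrow> 0"
      using L0 L1 by (intro tendsto_mult_left_zero LIMSEQ_power_zero) auto
    have "(\<lambda>n. (h ^^ n) x - a) \<longlonglongrightarrow> 0"
      by (rule Lim_null_comparison[OF _ g0]) (use dist in auto)
    then show "(\<lambda>n. (h ^^ n) x) \<longlonglongrightarrow> a" by (rule LIM_zero_cancel)
  next
    fix x :: real assume x: "x \<in> {0..1}"
    show "h x > x \<longleftrightarrow> x \<in> {0..<a}"
    proof (cases "x < a")
      case True
      have "\<bar>h a - h x\<bar> \<le> L * \<bar>a - x\<bar>" using lip[of a x] x a by auto
      then have "a - h x \<le> L * (a - x)" using True a by (simp add: abs_le_iff)
      moreover have "L * (a - x) < a - x" using True L1 by simp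
      ultimately have "x < h x" by linarith
      then show ?thesis using True x by auto
    next
      case False
      have "\<bar>h x - h a\<bar> \<le> L * \<bar>x - a\<bar>" using lip[of x a] x a by auto
      then have "h x - a \<le> L * (x - a)" using False a by (simp add: abs_le_iff)
      moreover have "L * (x - a) \<le> x - a" using False L1 mult_right_mono[of L 1 "x - a"] by simp
      ultimately have "\<not> x < h x" by linarith
      then show ?thesis using False x by auto
    qed
  qed
  show ?thesis using ex1 rest by blast
qed



definition Dd :: "nat \<Rightarrow> real \<Rightarrow> real \<Rightarrow> real" where
  "Dd d C x = real d * ((1 + (1+C) * x) / (1 + 2 * x)) ^ (d-1) * (1 / (1+2*x))^2"

definition fd :: "nat \<Rightarrow> real \<Rightarrow> real \<Rightarrow> real" where
  "fd d a x = real d * ((1 + a*x)/(1+2*x))^(d-1) * ((a - 2)/(1+2*x)^2)"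

lemma base_nonneg: "0 \<le> (x::real) \<Longrightarrow> 0 \<le> a \<Longrightarrow> 0 \<le> (1 + a*x)/(1+2*x)"
  by simp

lemma base_pos: "0 \<le> (x::real) \<Longrightarrow> 0 \<le> a \<Longrightarrow> 0 < (1 + a*x)/(1+2*x)"
  by (simp add: add_pos_nonneg)

lemma base_le1: "0 \<le> (x::real) \<Longrightarrow> a \<le> 2 \<Longrightarrow> (1 + a*x)/(1+2*x) \<le> 1"
  using mult_right_mono[of a 2 x] by simp

lemma base_lt1: "0 < (x::real) \<Longrightarrow> a < 2 \<Longrightarrow> (1 + a*x)/(1+2*x) < 1"
  using mult_strict_right_mono[of a 2 x] by simp

lemma base_mono_a: "0 \<le> (x::real) \<Longrightarrow> a \<le> b \<Longrightarrow> (1 + a*x)/(1+2*x) \<le> (1 + b*x)/(1+2*x)"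
  using mult_right_mono[of a b x] by (simp add: divide_right_mono)

lemma base_anti_x:
  assumes "0 \<le> (x::real)" "x \<le> y" "a \<le> 2"
  shows "(1 + a*y)/(1+2*y) \<le> (1 + a*x)/(1+2*x)"
proof -
  have "0 \<le> (2 - a) * (y - x)" using assms by simp
  then have "(1 + a*y)*(1+2*x) \<le> (1 + a*x)*(1+2*y)" by (simp add: algebra_simps)
  moreover have "0 < 1+2*x" "0 < 1+2*y" using assms by auto
  ultimately show ?thesis by (simp add: divide_simps)
qed

lemma ff_pos: "0 \<le> x \<Longrightarrow> 0 \<le> a \<Longrightarrow> 0 < ff d a x"
  unfolding ff_def using base_pos by simp

lemma ff_le1: "0 \<le> x \<Longrightarrow> 0 \<le> a \<Longrightarrow> a \<le> 2 \<Longrightarrow> ff d a x \<le> 1"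
  unfolding ff_def using base_le1 base_nonneg by (simp add: power_le_one)

lemma ff_lt1: "0 < x \<Longrightarrow> 0 \<le> a \<Longrightarrow> a < 2 \<Longrightarrow> 0 < d \<Longrightarrow> ff d a x < 1"
  unfolding ff_def using base_lt1[of x a] base_nonneg[of x a]
    power_strict_mono[of "(1 + a*x)/(1+2*x)" 1 d] by simp

lemma ff_mono_a: "0 \<le> x \<Longrightarrow> 0 \<le> a \<Longrightarrow> a \<le> b \<Longrightarrow> ff d a x \<le> ff d b x"
  unfolding ff_def by (intro power_mono base_mono_a base_nonneg)

lemma ff_anti_x: "0 \<le> x \<Longrightarrow> x \<le> y \<Longrightarrow> 0 \<le> a \<Longrightarrow> a \<le> 2 \<Longrightarrow> ff d a y \<le> ff d a x"
  unfolding ff_def by (intro power_mono base_anti_x base_nonneg) auto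

lemma ff_deriv:
  assumes "0 < 1 + 2*x"
  shows "(ff d a has_real_derivative fd d a x) (at x)"
proof -
  have "((\<lambda>x. (1 + a*x)/(1+2*x)) has_real_derivative (a-2)/(1+2*x)^2) (at x)"
    using assms by (auto intro!: derivative_eq_intros simp: field_simps power2_eq_square)
  from DERIV_power[OF this, of d] show ?thesis
    unfolding fd_def by (simp add: ff_def[abs_def] mult.commute mult.left_commute)
qed

lemma Dd_nonneg: "0 \<le> x \<Longrightarrow> 0 \<le> C \<Longrightarrow> 0 \<le> Dd d C x"
  unfolding Dd_def by simp

lemma Dd_anti:
  assumes "0 \<le> x" "x \<le> y" "0 \<le> C" "C \<le> 1"
  shows "Dd d C y \<le> Dd d C x"
proof -
  have b: "((1 + (1+C) * y) / (1 + 2 * y)) ^ (d-1) \<le> ((1 + (1+C) * x) / (1 + 2 * x)) ^ (d-1)"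
    using assms by (intro power_mono base_anti_x base_nonneg) auto
  have c: "(1 / (1+2*y))^2 \<le> (1 / (1+2*x))^2"
    using assms by (intro power_mono divide_left_mono) auto
  show ?thesis unfolding Dd_def
    using assms b c by (intro mult_mono mult_left_mono) auto
qed

lemma fd_bound:
  assumes "0 \<le> x" "0 \<le> c" "c \<le> C" "C \<le> 1"
  shows "\<bar>fd d (1+c) x\<bar> \<le> Dd d C x"
proof -
  let ?u = "(1 + (1+c)*x)/(1+2*x)" and ?U = "(1 + (1+C)*x)/(1+2*x)"
  have u0: "0 \<le> ?u" using assms by simp
  have uU: "?u ^ (d-1) \<le> ?U ^ (d-1)"
    using assms by (intro power_mono base_mono_a) auto
  have "\<bar>fd d (1+c) x\<bar> = real d * ?u ^ (d-1) * ((1 - c)/(1+2*x)^2)"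
    unfolding fd_def using assms u0 by (simp add: abs_mult abs_divide)
  also have "\<dots> \<le> real d * ?U ^ (d-1) * (1/(1+2*x)^2)"
  proof -
    have "(1 - c)/(1+2*x)^2 \<le> 1/(1+2*x)^2" using assms by (intro divide_right_mono) auto
    then show ?thesis using assms uU by (intro mult_mono mult_left_mono) auto
  qed
  also have "\<dots> = real d * ?U ^ (d-1) * (1/(1+2*x))^2" by (simp add: power_one_over)
  finally show ?thesis unfolding Dd_def .
qed

lemma ii_eq: "ii d c = (\<lambda>x. ff d 1 (ff d (1+c) x))"
  by (simp add: ii_def[abs_def])

lemma jj_eq: "jj d c = (\<lambda>x. ff d (1+c) (ff d 1 x))"
  by (simp add: jj_def[abs_def])

lemma ii_deriv:
  assumes "0 \<le> x" "0 \<le> c"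
  shows "(ii d c has_real_derivative fd d 1 (ff d (1+c) x) * fd d (1+c) x) (at x)"
  unfolding ii_eq
  by (rule DERIV_chain2[OF ff_deriv ff_deriv])
     (use assms ff_pos[of x "1+c" d] in auto)

lemma jj_deriv:
  assumes "0 \<le> x" "0 \<le> c"
  shows "(jj d c has_real_derivative fd d (1+c) (ff d 1 x) * fd d 1 x) (at x)"
  unfolding jj_eq
  by (rule DERIV_chain2[OF ff_deriv ff_deriv])
     (use assms ff_pos[of x 1 d] in auto)

lemma ii_piece:
  assumes "0 \<le> p" "p \<le> x" "x \<le> q" "0 \<le> y" "y \<le> ff d 1 q" "0 \<le> c" "c \<le> C" "C \<le> 1"
  shows "\<bar>fd d 1 (ff d (1+c) x) * fd d (1+c) x\<bar> \<le> Dd d 0 y * Dd d C p"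
proof -
  have "ff d 1 q \<le> ff d 1 x" using assms by (intro ff_anti_x) auto
  also have "\<dots> \<le> ff d (1+c) x" using assms by (intro ff_mono_a) auto
  finally have Y: "y \<le> ff d (1+c) x" using assms by linarith
  have 1: "\<bar>fd d 1 (ff d (1+c) x)\<bar> \<le> Dd d 0 y"
    using fd_bound[of "ff d (1+c) x" 0 0 d] Dd_anti[of y "ff d (1+c) x" 0 d] Y assms by simp
  have 2: "\<bar>fd d (1+c) x\<bar> \<le> Dd d C p"
    using fd_bound[of x c C d] Dd_anti[of p x C d] assms by simp
  show ?thesis unfolding abs_mult
    using 1 2 assms by (intro mult_mono Dd_nonneg) auto
qed

lemma jj_piece:
  assumes "0 \<le> p" "p \<le> x" "x \<le> q" "0 \<le> y" "y \<le> ff d 1 q" "0 \<le> c" "c \<le> C" "C \<le> 1"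
  shows "\<bar>fd d (1+c) (ff d 1 x) * fd d 1 x\<bar> \<le> Dd d C y * Dd d 0 p"
proof -
  have "ff d 1 q \<le> ff d 1 x" using assms by (intro ff_anti_x) auto
  then have Y: "y \<le> ff d 1 x" using assms by linarith
  have 1: "\<bar>fd d (1+c) (ff d 1 x)\<bar> \<le> Dd d C y"
    using fd_bound[of "ff d 1 x" c C d] Dd_anti[of y "ff d 1 x" C d] Y assms by simp
  have 2: "\<bar>fd d 1 x\<bar> \<le> Dd d 0 p"
    using fd_bound[of x 0 0 d] Dd_anti[of p x 0 d] assms by simp
  show ?thesis unfolding abs_mult
    using 1 2 assms by (intro mult_mono Dd_nonneg) auto
qed

definition Pc :: "nat \<Rightarrow> real \<Rightarrow> real \<Rightarrow> real \<Rightarrow> real \<Rightarrow> bool" where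
  "Pc d C p q y \<longleftrightarrow> 0 \<le> y \<and> y \<le> ff d 1 q \<and> Dd d 0 y * Dd d C p \<le> 99/100 \<and> Dd d C y * Dd d 0 p \<le> 99/100"

fun good :: "nat \<Rightarrow> real \<Rightarrow> real \<Rightarrow> (real \<times> real) list \<Rightarrow> bool" where
  "good d C p [] = False"
| "good d C p ((q,y) # r) = (p \<le> q \<and> Pc d C p q y \<and> (1 \<le> q \<or> good d C q r))"

lemma good_cover:
  "good d C p l \<Longrightarrow> p \<le> x \<Longrightarrow> x \<le> 1 \<Longrightarrow> \<exists>p' q y. p \<le> p' \<and> p' \<le> x \<and> x \<le> q \<and> Pc d C p' q y"
proof (induction l arbitrary: p)
  case Nil then show ?case by simp
next
  case (Cons a r)
  obtain q y where a: "a = (q,y)" by (cases a)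
  show ?case
  proof (cases "x \<le> q")
    case True then show ?thesis using Cons a by auto
  next
    case False
    then have "good d C q r" using Cons a by auto
    from Cons.IH[OF this] False Cons.prems obtain p' q' y' where
      "q \<le> p'" "p' \<le> x" "x \<le> q'" "Pc d C p' q' y'" by auto
    moreover have "p \<le> q" using Cons a by (auto simp: Pc_def)
    ultimately show ?thesis by (meson order_trans)
  qed
qed



fun hor :: "real list \<Rightarrow> real \<Rightarrow> real" where
  "hor [] x = 0"
| "hor (a # as) x = a + x * hor as x"

lemma hor_nonneg: "list_all (\<lambda>c. 0 \<le> c) cs \<Longrightarrow> 0 \<le> x \<Longrightarrow> 0 \<le> hor cs x"
  by (induction cs) auto

lemma hor_mono: "list_all (\<lambda>c. 0 \<le> c) cs \<Longrightarrow> 0 \<le> x \<Longrightarrow> x \<le> y \<Longrightarrow> hor cs x \<le> hor cs y"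
proof (induction cs)
  case Nil then show ?case by simp
next
  case (Cons a cs)
  then have "x * hor cs x \<le> y * hor cs y"
    using hor_nonneg[of cs y] hor_nonneg[of cs x] by (intro mult_mono) auto
  then show ?case by simp
qed

lemma hor_cont: "isCont (hor cs) x"
  by (induction cs) (auto intro!: continuous_intros)

lemma cg_lemma:
  fixes d :: nat and a :: real and cs :: "real list" and q :: real
  assumes iden: "\<And>x::real. (1+x+x^2)^d - x*(2+x)^d = (x-1)*(x * hor (a#cs) x - 1)"
    and a0: "0 < a" and cs0: "list_all (\<lambda>c. 0 \<le> c) cs"
    and q: "0 < q" "q < 1" "q * hor (a#cs) q - 1 > 0"
  shows "0 < c_g d \<and> c_g d < q"
proof -
  define Q where "Q x = x * hor (a#cs) x - 1" for x
  have nn: "list_all (\<lambda>c. 0 \<le> c) (a#cs)" using a0 cs0 by auto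
  have Hpos: "0 < hor (a#cs) x" if "0 \<le> x" for x
    using hor_nonneg[OF cs0 that] a0 that by (simp add: add_pos_nonneg)
  have Qmono: "Q x < Q y" if "0 \<le> x" "x < y" for x y
  proof -
    have "x * hor (a#cs) x \<le> x * hor (a#cs) y"
      using that hor_mono[OF nn, of x y] by (intro mult_left_mono) auto
    also have "\<dots> < y * hor (a#cs) y" using that Hpos[of y] by (intro mult_strict_right_mono) auto
    finally show ?thesis unfolding Q_def by simp
  qed
  have contQ: "continuous_on {0..q} Q"
    unfolding Q_def by (intro continuous_at_imp_continuous_on ballI continuous_intros hor_cont)
  obtain r where r: "r \<in> {0..q}" "Q r = 0"
    using IVT'[of Q 0 0 q, OF _ _ _ contQ] q by (auto simp: Q_def)
  have r0: "0 < r" using r by (cases "r = 0") (auto simp: Q_def)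
  have rq: "r < q" using r q by (cases "r = q") (auto simp: Q_def)
  have gg_eq: "gg d 1 x = x \<longleftrightarrow> Q x = 0" if "0 < x" "x < 1" for x
  proof -
    have pos: "0 < (2+x)^d" using that by simp
    have "gg d 1 x = (1+x+x^2)^d / (2+x)^d"
      unfolding gg_def by (simp add: power_divide add.commute add.left_commute)
    then have "gg d 1 x = x \<longleftrightarrow> (1+x+x^2)^d = x * (2+x)^d"
      using pos that by (simp add: divide_eq_eq)
    also have "\<dots> \<longleftrightarrow> (x-1) * Q x = 0" using iden[of x] unfolding Q_def by (auto simp: algebra_simps)
    also have "\<dots> \<longleftrightarrow> Q x = 0" using that by simp
    finally show ?thesis .
  qed
  have "c_g d = r"
    unfolding c_g_def
  proof (rule the_equality)
    show "0 < r \<and> r < 1 \<and> gg d 1 r = r" using r0 rq q r gg_eq[of r] by auto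
  next
    fix z assume z: "0 < z \<and> z < 1 \<and> gg d 1 z = z"
    then have Qz: "Q z = 0" using gg_eq[of z] by auto
    show "z = r"
    proof (cases z r rule: linorder_cases)
      case less then show ?thesis using Qmono[of z r] Qz r z by auto
    next
      case greater then show ?thesis using Qmono[of r z] Qz r r0 by auto
    qed
  qed
  then show ?thesis using r0 rq by simp
qed


lemma main_generic:
  assumes d: "1 \<le> d" and C: "0 \<le> C" "C < 1" and g: "good d C 0 l" and c: "0 \<le> c" "c \<le> C"
  shows "(\<exists>!a. 0 < a \<and> a < 1 \<and> ii d c a = a) \<and>
      (\<exists>!b. 0 < b \<and> b < 1 \<and> jj d c b = b) \<and>
      (\<forall>x\<in>{0..1}. \<bar>deriv (ii d c) x\<bar> < 1 \<and> \<bar>deriv (jj d c) x\<bar> < 1) \<and>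
      (\<forall>a b. (0 < a \<and> a < 1 \<and> ii d c a = a) \<and> (0 < b \<and> b < 1 \<and> jj d c b = b) \<longrightarrow>
         (\<forall>x\<in>{0..1}. (\<lambda>n. (ii d c ^^ n) x) \<longlonglongrightarrow> a) \<and>
         (\<forall>x\<in>{0..1}. (\<lambda>n. (jj d c ^^ n) x) \<longlonglongrightarrow> b) \<and>
         (\<forall>x\<in>{0..1}. ii d c x > x \<longleftrightarrow> x \<in> {0..<a}) \<and>
         (\<forall>x\<in>{0..1}. jj d c x > x \<longleftrightarrow> x \<in> {0..<b}))"
proof -
  have C1: "C \<le> 1" using C by simp
  have bi: "\<bar>fd d 1 (ff d (1+c) x) * fd d (1+c) x\<bar> \<le> 99/100" if xx: "0 \<le> x" "x \<le> 1" for x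
  proof -
    obtain p q y where pq: "0 \<le> p" "p \<le> x" "x \<le> q" "Pc d C p q y"
      using good_cover[OF g, of x] xx by auto
    have "\<bar>fd d 1 (ff d (1+c) x) * fd d (1+c) x\<bar> \<le> Dd d 0 y * Dd d C p"
      using pq c C1 by (intro ii_piece) (auto simp: Pc_def)
    then show ?thesis using pq by (auto simp: Pc_def)
  qed
  have bj: "\<bar>fd d (1+c) (ff d 1 x) * fd d 1 x\<bar> \<le> 99/100" if xx: "0 \<le> x" "x \<le> 1" for x
  proof -
    obtain p q y where pq: "0 \<le> p" "p \<le> x" "x \<le> q" "Pc d C p q y"
      using good_cover[OF g, of x] xx by auto
    have "\<bar>fd d (1+c) (ff d 1 x) * fd d 1 x\<bar> \<le> Dd d C y * Dd d 0 p"
      using pq c C1 by (intro jj_piece) (auto simp: Pc_def)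
    then show ?thesis using pq by (auto simp: Pc_def)
  qed
  have c2: "1 + c < 2" using c C by simp
  have d0: "0 < d" using d by simp
  have CI: "(\<exists>!a. 0 < a \<and> a < 1 \<and> ii d c a = a) \<and>
         (\<forall>a. 0 < a \<and> a < 1 \<and> ii d c a = a \<longrightarrow>
            (\<forall>x\<in>{0..1}. (\<lambda>n. (ii d c ^^ n) x) \<longlonglongrightarrow> a) \<and>
            (\<forall>x\<in>{0..1}. ii d c x > x \<longleftrightarrow> x \<in> {0..<a}))"
  proof (rule contraction_props[of "ii d c" "\<lambda>x. fd d 1 (ff d (1+c) x) * fd d (1+c) x" "99/100"])
    show "\<And>x. 0 \<le> x \<Longrightarrow> x \<le> 1 \<Longrightarrow> (ii d c has_real_derivative fd d 1 (ff d (1+c) x) * fd d (1+c) x) (at x)"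
      using c by (intro ii_deriv) auto
    show "\<And>x. 0 \<le> x \<Longrightarrow> x \<le> 1 \<Longrightarrow> \<bar>fd d 1 (ff d (1+c) x) * fd d (1+c) x\<bar> \<le> 99/100"
      by (rule bi)
    show "(99/100::real) < 1" by simp
    show "0 \<le> ii d c x \<and> ii d c x \<le> 1" if "0 \<le> x" "x \<le> 1" for x
      unfolding ii_def using that c ff_pos[of x "1+c" d] ff_pos[of "ff d (1+c) x" 1 d]
        ff_le1[of "ff d (1+c) x" 1 d] by auto
    show "0 < ii d c 0" unfolding ii_def using c ff_pos[of "ff d (1+c) 0" 1 d] ff_pos[of 0 "1+c" d] by auto
    show "ii d c 1 < 1" unfolding ii_def using c d0 ff_pos[of 1 "1+c" d]
      by (intro ff_lt1) auto
  qed
  have CJ: "(\<exists>!a. 0 < a \<and> a < 1 \<and> jj d c a = a) \<and>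
         (\<forall>a. 0 < a \<and> a < 1 \<and> jj d c a = a \<longrightarrow>
            (\<forall>x\<in>{0..1}. (\<lambda>n. (jj d c ^^ n) x) \<longlonglongrightarrow> a) \<and>
            (\<forall>x\<in>{0..1}. jj d c x > x \<longleftrightarrow> x \<in> {0..<a}))"
  proof (rule contraction_props[of "jj d c" "\<lambda>x. fd d (1+c) (ff d 1 x) * fd d 1 x" "99/100"])
    show "\<And>x. 0 \<le> x \<Longrightarrow> x \<le> 1 \<Longrightarrow> (jj d c has_real_derivative fd d (1+c) (ff d 1 x) * fd d 1 x) (at x)"
      using c by (intro jj_deriv) auto
    show "\<And>x. 0 \<le> x \<Longrightarrow> x \<le> 1 \<Longrightarrow> \<bar>fd d (1+c) (ff d 1 x) * fd d 1 x\<bar> \<le> 99/100"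
      by (rule bj)
    show "(99/100::real) < 1" by simp
    show "0 \<le> jj d c x \<and> jj d c x \<le> 1" if "0 \<le> x" "x \<le> 1" for x
      unfolding jj_def using that c c2 ff_pos[of x 1 d] ff_pos[of "ff d 1 x" "1+c" d]
        ff_le1[of "ff d 1 x" "1+c" d] by auto
    show "0 < jj d c 0" unfolding jj_def using c ff_pos[of "ff d 1 0" "1+c" d] ff_pos[of 0 1 d] by auto
    show "jj d c 1 < 1" unfolding jj_def using c c2 d0 ff_pos[of 1 1 d]
      by (intro ff_lt1) auto
  qed
  have DI: "\<bar>deriv (ii d c) x\<bar> < 1 \<and> \<bar>deriv (jj d c) x\<bar> < 1" if "x \<in> {0..1}" for x
  proof -
    have "deriv (ii d c) x = fd d 1 (ff d (1+c) x) * fd d (1+c) x"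
      using that c by (intro DERIV_imp_deriv ii_deriv) auto
    moreover have "deriv (jj d c) x = fd d (1+c) (ff d 1 x) * fd d 1 x"
      using that c by (intro DERIV_imp_deriv jj_deriv) auto
    ultimately show ?thesis using bi[of x] bj[of x] that by auto
  qed
  have RI: "(\<forall>x\<in>{0..1}. (\<lambda>n. (ii d c ^^ n) x) \<longlonglongrightarrow> a) \<and> (\<forall>x\<in>{0..1}. ii d c x > x \<longleftrightarrow> x \<in> {0..<a})"
    if "0 < a \<and> a < 1 \<and> ii d c a = a" for a
    using conjunct2[OF CI] that by (elim allE impE) auto
  have RJ: "(\<forall>x\<in>{0..1}. (\<lambda>n. (jj d c ^^ n) x) \<longlonglongrightarrow> b) \<and> (\<forall>x\<in>{0..1}. jj d c x > x \<longleftrightarrow> x \<in> {0..<b})"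
    if "0 < b \<and> b < 1 \<and> jj d c b = b" for b
    using conjunct2[OF CJ] that by (elim allE impE) auto
  show ?thesis
  proof (intro conjI allI impI ballI)
    show "\<exists>!a. 0 < a \<and> a < 1 \<and> ii d c a = a" by (rule conjunct1[OF CI])
    show "\<exists>!b. 0 < b \<and> b < 1 \<and> jj d c b = b" by (rule conjunct1[OF CJ])
  next
    fix x :: real assume "x \<in> {0..1}"
    then show "\<bar>deriv (ii d c) x\<bar> < 1" "\<bar>deriv (jj d c) x\<bar> < 1" using DI by auto
  next
    fix a b x :: real
    assume ab: "(0 < a \<and> a < 1 \<and> ii d c a = a) \<and> (0 < b \<and> b < 1 \<and> jj d c b = b)"
      and x: "x \<in> {0..1}"
    have A: "(\<forall>x\<in>{0..1}. (\<lambda>n. (ii d c ^^ n) x) \<longlonglongrightarrow> a) \<and> (\<forall>x\<in>{0..1}. ii d c x > x \<longleftrightarrow> x \<in> {0..<a})"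
      using ab by (intro RI) simp
    have B: "(\<forall>x\<in>{0..1}. (\<lambda>n. (jj d c ^^ n) x) \<longlonglongrightarrow> b) \<and> (\<forall>x\<in>{0..1}. jj d c x > x \<longleftrightarrow> x \<in> {0..<b})"
      using ab by (intro RJ) simp
    show "(\<lambda>n. (ii d c ^^ n) x) \<longlonglongrightarrow> a" using A x by simp
    show "(\<lambda>n. (jj d c ^^ n) x) \<longlonglongrightarrow> b" using B x by simp
    show "ii d c x > x \<longleftrightarrow> x \<in> {0..<a}" using A x by simp
    show "jj d c x > x \<longleftrightarrow> x \<in> {0..<b}" using B x by simp
  qed
qed

lemma good2: "good 2 (1/2) 0 [(199/200, 89/200), (1, 111/250)]"
  by (simp add: Pc_def Dd_def ff_def power_divide)

lemma cg2: "0 < c_g 2 \<and> c_g 2 < 1/2"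
proof (rule cg_lemma[where a=1 and cs="[2, 1]"])
  show "\<And>x::real. (1+x+x^2)^2 - x*(2+x)^2 = (x-1)*(x * hor [1, 2, 1] x - 1)"
    by (simp add: algebra_simps power_numeral_reduce)
qed (simp_all)

lemma good3: "good 3 (1/5) 0 [(17/100, 133/200), (329/400, 327/1000), (1, 37/125)]"
  by (simp add: Pc_def Dd_def ff_def power_divide)

lemma cg3: "0 < c_g 3 \<and> c_g 3 < 1/5"
proof (rule cg_lemma[where a=4 and cs="[10, 9, 4, 1]"])
  show "\<And>x::real. (1+x+x^2)^3 - x*(2+x)^3 = (x-1)*(x * hor [4, 10, 9, 4, 1] x - 1)"
    by (simp add: algebra_simps power_numeral_reduce)
qed (simp_all)

lemma good4: "good 4 (1/10) 0 [(31/400, 757/1000), (77/400, 549/1000), (17/40, 44/125), (1, 197/1000)]"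
  by (simp add: Pc_def Dd_def ff_def power_divide)

lemma cg4: "0 < c_g 4 \<and> c_g 4 < 1/10"
proof (rule cg_lemma[where a=11 and cs="[33, 41, 30, 15, 5, 1]"])
  show "\<And>x::real. (1+x+x^2)^4 - x*(2+x)^4 = (x-1)*(x * hor [11, 33, 41, 30, 15, 5, 1] x - 1)"
    by (simp add: algebra_simps power_numeral_reduce)
qed (simp_all)

lemma good5: "good 5 (1/25) 0 [(23/400, 767/1000), (47/400, 303/500), (3/16, 12/25), (57/200, 367/1000), (183/400, 51/200), (1, 131/1000)]"
  by (simp add: Pc_def Dd_def ff_def power_divide)

lemma cg5: "0 < c_g 5 \<and> c_g 5 < 1/25"
proof (rule cg_lemma[where a=26 and cs="[91, 141, 136, 95, 51, 21, 6, 1]"])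
  show "\<And>x::real. (1+x+x^2)^5 - x*(2+x)^5 = (x-1)*(x * hor [26, 91, 141, 136, 95, 51, 21, 6, 1] x - 1)"
    by (simp add: algebra_simps power_numeral_reduce)
qed (simp_all)

lemma good6: "good 6 (1/50) 0 [(19/400, 383/500), (9/100, 621/1000), (51/400, 21/40), (33/200, 451/1000), (81/400, 393/1000), (49/200, 17/50), (119/400, 289/1000), (37/100, 119/500), (99/200, 179/1000), (341/400, 103/1000), (1, 87/1000)]"
  by (simp add: Pc_def Dd_def ff_def power_divide)

lemma cg6: "0 < c_g 6 \<and> c_g 6 < 1/50"
proof (rule cg_lemma[where a=57 and cs="[228, 418, 488, 422, 293, 168, 78, 28, 7, 1]"])
  show "\<And>x::real. (1+x+x^2)^6 - x*(2+x)^6 = (x-1)*(x * hor [57, 228, 418, 488, 422, 293, 168, 78, 28, 7, 1] x - 1)"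
    by (simp add: algebra_simps power_numeral_reduce)
qed (simp_all)

lemma good7: "good 7 (1/100) 0 [(9/200, 93/125), (2/25, 303/500), (43/400, 261/500), (51/400, 59/125), (29/200, 217/500), (4/25, 101/250), (69/400, 191/500), (37/200, 181/500), (39/200, 347/1000), (41/200, 83/250), (43/200, 319/1000), (9/40, 307/1000), (93/400, 149/500), (97/400, 287/1000), (1/4, 279/1000), (103/400, 271/1000), (107/400, 261/1000), (111/400, 63/250), (23/80, 243/1000), (3/10, 233/1000), (63/200, 111/500), (133/400, 21/100), (71/200, 49/250), (31/80, 89/500), (7/16, 31/200), (53/100, 31/250), (317/400, 77/1000), (1, 29/500)]"
  by (simp add: Pc_def Dd_def ff_def power_divide)

lemma cg7: "0 < c_g 7 \<and> c_g 7 < 1/100"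
proof (rule cg_lemma[where a=120 and cs="[540, 1135, 1534, 1548, 1275, 896, 540, 274, 113, 36, 8, 1]"])
  show "\<And>x::real. (1+x+x^2)^7 - x*(2+x)^7 = (x-1)*(x * hor [120, 540, 1135, 1534, 1548, 1275, 896, 540, 274, 113, 36, 8, 1] x - 1)"
    by (simp add: algebra_simps power_numeral_reduce)
qed (simp_all)

lemma fin_lemma:
  fixes d :: nat
  assumes "0 < c_g d \<and> c_g d < C" "0 \<le> C" "C < 1" "good d C 0 l" "1 \<le> d"
  shows "\<exists>cd :: real. 0 < c_g d \<and> c_g d < cd \<and>
    (\<forall>c. 0 \<le> c \<and> c < cd \<longrightarrow>
      (\<exists>!a. 0 < a \<and> a < 1 \<and> ii d c a = a) \<and>
      (\<exists>!b. 0 < b \<and> b < 1 \<and> jj d c b = b) \<and>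
      (\<forall>x\<in>{0..1}. \<bar>deriv (ii d c) x\<bar> < 1 \<and> \<bar>deriv (jj d c) x\<bar> < 1) \<and>
      (\<forall>a b. (0 < a \<and> a < 1 \<and> ii d c a = a) \<and> (0 < b \<and> b < 1 \<and> jj d c b = b) \<longrightarrow>
         (\<forall>x\<in>{0..1}. (\<lambda>n. (ii d c ^^ n) x) \<longlonglongrightarrow> a) \<and>
         (\<forall>x\<in>{0..1}. (\<lambda>n. (jj d c ^^ n) x) \<longlonglongrightarrow> b) \<and>
         (\<forall>x\<in>{0..1}. ii d c x > x \<longleftrightarrow> x \<in> {0..<a}) \<and>
         (\<forall>x\<in>{0..1}. jj d c x > x \<longleftrightarrow> x \<in> {0..<b})))"
    apply (rule exI[of _ C])
    apply (rule conjI)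
     apply (use assms in simp)
    apply (rule conjI)
     apply (use assms in simp)
    apply (rule allI, rule impI)
    apply (rule main_generic[of d C l])
    using assms by auto

theorem lemma6p3:
  fixes d :: nat
  assumes "2 \<le> d" and "d \<le> 7"
  shows "\<exists>cd :: real. 0 < c_g d \<and> c_g d < cd \<and>
    (\<forall>c. 0 \<le> c \<and> c < cd \<longrightarrow>
      (\<exists>!a. 0 < a \<and> a < 1 \<and> ii d c a = a) \<and>
      (\<exists>!b. 0 < b \<and> b < 1 \<and> jj d c b = b) \<and>
      (\<forall>x\<in>{0..1}. \<bar>deriv (ii d c) x\<bar> < 1 \<and> \<bar>deriv (jj d c) x\<bar> < 1) \<and>
      (\<forall>a b. (0 < a \<and> a < 1 \<and> ii d c a = a) \<and> (0 < b \<and> b < 1 \<and> jj d c b = b) \<longrightarrow>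
         (\<forall>x\<in>{0..1}. (\<lambda>n. (ii d c ^^ n) x) \<longlonglongrightarrow> a) \<and>
         (\<forall>x\<in>{0..1}. (\<lambda>n. (jj d c ^^ n) x) \<longlonglongrightarrow> b) \<and>
         (\<forall>x\<in>{0..1}. ii d c x > x \<longleftrightarrow> x \<in> {0..<a}) \<and>
         (\<forall>x\<in>{0..1}. jj d c x > x \<longleftrightarrow> x \<in> {0..<b})))"
proof -
  have "d = 2 \<or> d = 3 \<or> d = 4 \<or> d = 5 \<or> d = 6 \<or> d = 7" using assms by auto
  then show ?thesis
  proof (elim disjE)
    assume "d = 2"
    then show ?thesis using fin_lemma[OF cg2 _ _ good2] by simp
  next
    assume "d = 3"
    then show ?thesis using fin_lemma[OF cg3 _ _ good3] by simp
  next
    assume "d = 4"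
    then show ?thesis using fin_lemma[OF cg4 _ _ good4] by simp
  next
    assume "d = 5"
    then show ?thesis using fin_lemma[OF cg5 _ _ good5] by simp
  next
    assume "d = 6"
    then show ?thesis using fin_lemma[OF cg6 _ _ good6] by simp
  next
    assume "d = 7"
    then show ?thesis using fin_lemma[OF cg7 _ _ good7] by simp
  qed
qed

end
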